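(* Let $T\ge2$. For every $s\ge s_{a,2}(T):=64(\sigma/\Delta_k)^2\log T$, $$a_{k,s,2}:=E\big[\min\{N_{1,s}(\tau_k),T\}\,\mathbf 1(A_{1,s}^c)\,\mathbf 1(G_{1,s})\big]\le T^{-1}.$$
   Context: Setting: arm $k\in[K]$ has i.i.d. rewards $Y_{k,1},Y_{k,2},\dots\sim N(\mu_k,\sigma^2)$; arm 1 is optimal, $\mu_1=\max_k\mu_k$, $\Delta_k=\mu_1-\mu_k>0$ for the suboptimal arm $k$ considered, and $\tau_k=(\mu_1+\mu_k)/2$. For $s\ge1$: $\mathcal H_{k,s}=(Y_{k,1},\dots,Y_{k,s})$, $\bar Y_{k,s}=s^{-1}\sum_{i=1}^sY_{k,i}$, $\mathrm{RSS}_{k,s}=\sum_{i=1}^s(Y_{k,i}-\bar Y_{k,s})^2$. Given $\sigma_a>0$, $\mathrm{PRSS}_{s}=2(s+2)\sigma_a^2$ and $r=\sigma_a/\sigma$. The ReBoot index given $\mathcal H_{k,s}$ is $\hat\mu^*_{k,s}=\bar Y_{k,s}+\frac1{s+2}\sum_{i=1}^{s+2}w_ie_{k,i}$ with $e_{k,i}=Y_{k,i}-\bar Y_{k,s}$ ($i\le s$), $e_{k,s+1}=\sqrt{s+2}\sigma_a$, $e_{k,s+2}=-\sqrt{s+2}\sigma_a$, and $w_i$ i.i.d. $N(0,1)$ independent of the rewards. Define $Q_{k,s}(\tau)=P(\hat\mu^*_{k,s}>\tau\mid\mathcal H_{k,s})$ and $N_{1,s}(\tau)=Q_{1,s}(\tau)^{-1}-1$.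 Events: $A_{1,s}=\{\bar Y_{1,s}-\mu_1>-\Delta_k/4\}$, $G_{1,s}=\{\mathrm{RSS}_{1,s}\le\mathrm{PRSS}_s\}$. *)

theory Defs
  imports "HOL-Probability.Probability"
begin

text \<open>Histories are functions y :: nat => real; the first s rewards are y 1, ..., y s.\<close>

definition normal_measure :: "real \<Rightarrow> real \<Rightarrow> real measure" where
  "normal_measure m sd = density lborel (normal_density m sd)"

definition history_measure :: "nat \<Rightarrow> real \<Rightarrow> real \<Rightarrow> (nat \<Rightarrow> real) measure" where
  "history_measure s mu sd = PiM {1..s} (\<lambda>_. normal_measure mu sd)"

definition weight_measure :: "nat \<Rightarrow> (nat \<Rightarrow> real) measure" where
  "weight_measure s = PiM {1..s+2} (\<lambda>_. normal_measure 0 1)"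

definition ybar :: "nat \<Rightarrow> (nat \<Rightarrow> real) \<Rightarrow> real" where
  "ybar s y = (\<Sum>i=1..s. y i) / real s"

definition RSS :: "nat \<Rightarrow> (nat \<Rightarrow> real) \<Rightarrow> real" where
  "RSS s y = (\<Sum>i=1..s. (y i - ybar s y)^2)"

definition PRSS :: "nat \<Rightarrow> real \<Rightarrow> real" where
  "PRSS s sda = 2 * (real s + 2) * sda^2"

definition resid :: "nat \<Rightarrow> real \<Rightarrow> (nat \<Rightarrow> real) \<Rightarrow> nat \<Rightarrow> real" where
  "resid s sda y i =
     (if i \<le> s then y i - ybar s y
      else if i = s + 1 then sqrt (real s + 2) * sda
      else - sqrt (real s + 2) * sda)"

definition reboot_index :: "nat \<Rightarrow> real \<Rightarrow> (nat \<Rightarrow> real) \<Rightarrow> (nat \<Rightarrow> real) \<Rightarrow> real" where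
  "reboot_index s sda y w =
     ybar s y + (1 / (real s + 2)) * (\<Sum>i=1..s+2. w i * resid s sda y i)"

text \<open>Q_{k,s}(tau) = P(index > tau | history): probability over the weights only.\<close>
definition Qfun :: "nat \<Rightarrow> real \<Rightarrow> real \<Rightarrow> (nat \<Rightarrow> real) \<Rightarrow> real" where
  "Qfun s sda tau y =
     measure (weight_measure s) {w \<in> space (weight_measure s). reboot_index s sda y w > tau}"

definition Nfun :: "nat \<Rightarrow> real \<Rightarrow> real \<Rightarrow> (nat \<Rightarrow> real) \<Rightarrow> real" where
  "Nfun s sda tau y = 1 / Qfun s sda tau y - 1"

text \<open>a_{k,s,2} = E[min(N_{1,s}(tau_k), T) 1(A^c_{1,s}) 1(G_{1,s})], as a nonnegative integral.\<close>
definition a_ks2 :: "nat \<Rightarrow> real \<Rightarrow> real \<Rightarrow> real \<Rightarrow> real \<Rightarrow> real \<Rightarrow> ennreal" where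
  "a_ks2 s mu1 muk sd sda T =
     (let Delta = mu1 - muk; tau = (mu1 + muk) / 2 in
      \<integral>\<^sup>+ y. ennreal (min (Nfun s sda tau y) T
               * (if ybar s y - mu1 \<le> - Delta / 4 then 1 else 0)
               * (if RSS s y \<le> PRSS s sda then 1 else 0))
        \<partial>history_measure s mu1 sd)"

end

theory Submission
  imports Defs
begin
lemma normal_mgf_identity:
  fixes m sd l x :: real
  assumes "sd > 0"
  shows "normal_density m sd x * exp (- l * (x - m)) =
         exp (l^2 * sd^2 / 2) * normal_density (m - l * sd^2) sd x"
proof -
  have e: "-(x - m)\<^sup>2/ (2 * sd\<^sup>2) + (- l * (x - m)) =
        l^2 * sd^2 / 2 + (-(x - (m - l * sd^2))\<^sup>2/ (2 * sd\<^sup>2))"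
  proof -
    have "sd^2 > 0" using assms by simp
    then show ?thesis by (simp add: divide_simps) (simp add: power2_eq_square algebra_simps power4_eq_xxxx)
  qed
  have "exp (-(x - m)\<^sup>2/ (2 * sd\<^sup>2)) * exp (- l * (x - m)) =
        exp (l^2 * sd^2 / 2) * exp (-(x - (m - l * sd^2))\<^sup>2/ (2 * sd\<^sup>2))"
    by (simp only: exp_add[symmetric] e)
  then show ?thesis unfolding normal_density_def by (simp only: mult.assoc mult.left_commute)
qed
lemma normal_mgf:
  fixes m sd l :: real
  assumes "sd > 0"
  shows "(\<integral>\<^sup>+ x. ennreal (exp (- l * (x - m))) \<partial>normal_measure m sd) =
         ennreal (exp (l^2 * sd^2 / 2))"
proof -
  have "(\<integral>\<^sup>+ x. ennreal (exp (- l * (x - m))) \<partial>normal_measure m sd) =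
        (\<integral>\<^sup>+ x. ennreal (normal_density m sd x) * ennreal (exp (- l * (x - m))) \<partial>lborel)"
    unfolding normal_measure_def by (subst nn_integral_density) auto
  also have "\<dots> = (\<integral>\<^sup>+ x. ennreal (exp (l^2 * sd^2 / 2)) * ennreal (normal_density (m - l * sd^2) sd x) \<partial>lborel)"
    proof (intro nn_integral_cong)
    fix x
    have "ennreal (normal_density m sd x) * ennreal (exp (- l * (x - m))) = ennreal (normal_density m sd x * exp (- l * (x - m)))"
      by (rule ennreal_mult[symmetric]) auto
    also have "\<dots> = ennreal (exp (l^2 * sd^2 / 2) * normal_density (m - l * sd^2) sd x)"
      by (simp only: normal_mgf_identity[OF assms])
    also have "\<dots> = ennreal (exp (l^2 * sd^2 / 2)) * ennreal (normal_density (m - l * sd^2) sd x)"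
      by (rule ennreal_mult) auto
    finally show "ennreal (normal_density m sd x) * ennreal (exp (- l * (x - m))) = ennreal (exp (l^2 * sd^2 / 2)) * ennreal (normal_density (m - l * sd^2) sd x)" .
  qed
  also have "\<dots> = ennreal (exp (l^2 * sd^2 / 2)) * (\<integral>\<^sup>+ x. ennreal (normal_density (m - l * sd^2) sd x) \<partial>lborel)"
    by (subst nn_integral_cmult) auto
  also have "(\<integral>\<^sup>+ x. ennreal (normal_density (m - l * sd^2) sd x) \<partial>lborel) = 1"
    by (subst nn_integral_eq_integral) (use assms in auto)
  finally show ?thesis by simp
qed


lemma aux_cancel: "D \<noteq> 0 \<Longrightarrow> sd \<noteq> 0 \<Longrightarrow> 64 * (sd / D)^2 * L * D^2 / (32 * sd^2) = 2 * (L::real)"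
  by (simp add: power_divide field_simps)

theorem mainTheorem5:
  fixes mu1 muk sd sda :: real and T s :: nat
  assumes "sd > 0" and "sda > 0" and "mu1 > muk"
    and "T \<ge> 2" and "s \<ge> 1"
    and "real s \<ge> 64 * (sd / (mu1 - muk))^2 * ln (real T)"
  shows "a_ks2 s mu1 muk sd sda (real T) \<le> ennreal (1 / real T)"
proof -
  define c where "c = (mu1 - muk) / 4"
  define l where "l = c / sd^2"
  have cpos: "c > 0" using assms(3) by (simp add: c_def)
  have lpos: "l > 0" using cpos assms(1) by (simp add: l_def)
  define g where "g = (\<lambda>y::nat\<Rightarrow>real. exp (- l * real s * c) * (\<Prod>i\<in>{1..s}. exp (- l * (y i - mu1))))"
  define F where "F = (\<lambda>y. min (Nfun s sda ((mu1 + muk) / 2) y) (real T)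
               * (if ybar s y - mu1 \<le> - (mu1 - muk) / 4 then 1 else 0)
               * (if RSS s y \<le> PRSS s sda then 1 else 0))"
  have pw: "ennreal (F y) \<le> ennreal (real T) * ennreal (g y)" for y
  proof (cases "ybar s y - mu1 \<le> - (mu1 - muk) / 4")
    case False
    then show ?thesis by (simp add: F_def)
  next
    case True
    have "ybar s y \<le> mu1 - c" using True unfolding c_def by linarith
    then have "(\<Sum>i=1..s. y i) / real s \<le> mu1 - c" by (simp only: ybar_def)
    then have "(\<Sum>i=1..s. y i) \<le> real s * (mu1 - c)" using assms(5)
      by (simp add: divide_le_eq mult.commute)
    then have "(\<Sum>i=1..s. (y i - mu1)) \<le> - real s * c"
      by (simp add: sum_subtractf algebra_simps)
    then have H: "l * (\<Sum>i=1..s. (y i - mu1)) \<le> l * (- real s * c)"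
      using lpos by (intro mult_left_mono) auto
    have "(\<Sum>i=1..s. - l * (y i - mu1)) = - (l * (\<Sum>i=1..s. (y i - mu1)))" by (simp add: sum_distrib_left sum_negf)
    then have "0 \<le> - l * real s * c + (\<Sum>i=1..s. - l * (y i - mu1))"
      using H by simp
    then have "1 \<le> exp (- l * real s * c + (\<Sum>i=1..s. - l * (y i - mu1)))" by simp
    also have "\<dots> = g y" by (simp only: g_def exp_add exp_sum[OF finite_atLeastAtMost])
    finally have g1: "1 \<le> g y" .
    have "F y \<le> real T" by (simp add: F_def)
    also have "\<dots> \<le> real T * g y" using g1 mult_left_mono[OF g1, of "real T"] by simp
    finally have "F y \<le> real T * g y" .
    moreover have "ennreal (real T * g y) = ennreal (real T) * ennreal (g y)"
      using g1 by (intro ennreal_mult) auto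
    ultimately show ?thesis by (metis ennreal_leI)
  qed
  have comp: "(\<lambda>x. x i) \<in> borel_measurable (PiM {1..s} (\<lambda>_. normal_measure mu1 sd))" if "i \<in> {1..s}" for i
  proof -
    have "(\<lambda>x. x i) \<in> measurable (PiM {1..s} (\<lambda>_. normal_measure mu1 sd)) (normal_measure mu1 sd)"
      using that by (rule measurable_component_singleton)
    moreover have "sets (normal_measure mu1 sd) = sets borel" by (simp add: normal_measure_def)
    ultimately show ?thesis using measurable_cong_sets by metis
  qed
  have gm: "g \<in> borel_measurable (history_measure s mu1 sd)"
  proof -
    show ?thesis unfolding g_def history_measure_def
      apply (intro borel_measurable_times borel_measurable_prod borel_measurable_const)
      subgoal for i by (rule measurable_compose[OF comp[of i]]) (simp, measurable)
      done
  qed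
  have "a_ks2 s mu1 muk sd sda (real T) = (\<integral>\<^sup>+ y. ennreal (F y) \<partial>history_measure s mu1 sd)"
    unfolding a_ks2_def F_def Let_def by (rule refl)
  also have "\<dots> \<le> (\<integral>\<^sup>+ y. ennreal (real T) * ennreal (g y) \<partial>history_measure s mu1 sd)"
    by (intro nn_integral_mono pw)
  also have "\<dots> = ennreal (real T) * (\<integral>\<^sup>+ y. ennreal (g y) \<partial>history_measure s mu1 sd)"
    by (subst nn_integral_cmult) (use gm in auto)
  also have "(\<integral>\<^sup>+ y. ennreal (g y) \<partial>history_measure s mu1 sd) =
     ennreal (exp (- l * real s * c)) * (\<integral>\<^sup>+ y. (\<Prod>i\<in>{1..s}. ennreal (exp (- l * (y i - mu1)))) \<partial>history_measure s mu1 sd)"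
  proof -
    have pm: "(\<lambda>y. \<Prod>i\<in>{1..s}. ennreal (exp (- l * (y i - mu1)))) \<in> borel_measurable (history_measure s mu1 sd)"
      unfolding history_measure_def
      apply (intro borel_measurable_prod_ennreal)
      subgoal for i by (rule measurable_compose[OF comp[of i]]) (simp, measurable)
      done
    have "(\<integral>\<^sup>+ y. ennreal (g y) \<partial>history_measure s mu1 sd) =
      (\<integral>\<^sup>+ y. ennreal (exp (- l * real s * c)) * (\<Prod>i\<in>{1..s}. ennreal (exp (- l * (y i - mu1)))) \<partial>history_measure s mu1 sd)"
      by (intro nn_integral_cong) (simp add: g_def prod_ennreal ennreal_mult prod_nonneg)
    also have "\<dots> = ennreal (exp (- l * real s * c)) * (\<integral>\<^sup>+ y. (\<Prod>i\<in>{1..s}. ennreal (exp (- l * (y i - mu1)))) \<partial>history_measure s mu1 sd)"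
      by (rule nn_integral_cmult[OF pm])
    finally show ?thesis .
  qed
  also have "(\<integral>\<^sup>+ y. (\<Prod>i\<in>{1..s}. ennreal (exp (- l * (y i - mu1)))) \<partial>history_measure s mu1 sd)
      = (\<Prod>i\<in>{1..s}. ennreal (exp (l^2 * sd^2 / 2)))"
  proof -
    interpret product_sigma_finite "\<lambda>_. normal_measure mu1 sd"
      unfolding product_sigma_finite_def
      using prob_space_imp_sigma_finite[OF prob_space_normal_density[of sd mu1, OF assms(1)]] by (simp add: normal_measure_def)
    show ?thesis unfolding history_measure_def
      apply (subst product_nn_integral_prod)
        apply simp
       apply (subst measurable_cong_sets[of _ borel _ borel])
         apply (simp add: normal_measure_def)
        apply simp
       apply measurable
      apply (simp only: normal_mgf[OF assms(1)])
      done
  qed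
  also have "(\<Prod>i\<in>{1..s}. ennreal (exp (l^2 * sd^2 / 2))) = ennreal (exp (real s * (l^2 * sd^2 / 2)))"
    by (simp add: ennreal_power exp_of_nat_mult[symmetric] del: exp_of_nat_mult)
  finally have A: "a_ks2 s mu1 muk sd sda (real T) \<le>
     ennreal (real T * (exp (- l * real s * c) * exp (real s * (l^2 * sd^2 / 2))))"
    by (simp add: ennreal_mult mult.assoc)
  have "- l * real s * c + real s * (l^2 * sd^2 / 2) = - real s * (mu1 - muk)^2 / (32 * sd^2)"
    using assms(1) by (simp add: l_def c_def field_simps power2_eq_square)
  also have "\<dots> \<le> - 2 * ln (real T)"
  proof -
    have "64 * (sd / (mu1 - muk))^2 * ln (real T) * (mu1 - muk)^2 / (32 * sd^2) = 2 * ln (real T)"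
      using assms(1,3) aux_cancel[of "mu1 - muk" sd "ln (real T)"] by simp
    moreover have "64 * (sd / (mu1 - muk))^2 * ln (real T) * (mu1 - muk)^2 / (32 * sd^2)
        \<le> real s * (mu1 - muk)^2 / (32 * sd^2)"
      using assms(6) assms(1) by (intro divide_right_mono mult_right_mono) auto
    ultimately show ?thesis by simp
  qed
  finally have E: "exp (- l * real s * c) * exp (real s * (l^2 * sd^2 / 2)) \<le> exp (- 2 * ln (real T))"
    by (simp add: exp_add[symmetric])
  have T0: "real T > 0" using assms(4) by simp
  have "exp (- 2 * ln (real T)) = real T powr (- 2)" using T0 by (simp add: powr_def)
  also have "\<dots> = 1 / (real T)^2" using T0 by (simp add: powr_minus_divide)
  finally have X: "exp (- 2 * ln (real T)) = 1 / (real T)^2" .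
  from X have "real T * (exp (- l * real s * c) * exp (real s * (l^2 * sd^2 / 2))) \<le> 1 / real T"
    using E T0 mult_left_mono[OF E, of "real T"] by (simp add: power2_eq_square)
  with A show ?thesis by (meson ennreal_leI order_trans)
qed

end
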